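(* Let $n\ge2$, let $x,y\in\mathbb C^n$, and let $B=xe_n^\ast+e_ny^\ast\in M_n(\mathbb C)$ have nonzero entries at positions $(1,n)$, $(n,1)$ and $(n,n)$. Then $B$ has rank two, so its singular value decomposition has the form $B=\sigma_1u_1v_1^\ast+\sigma_2u_2v_2^\ast$ with $\sigma_1\ge\sigma_2>0$ and orthonormal pairs $u_1,u_2$ and $v_1,v_2$; both summands $\sigma_iu_iv_i^\ast$ have nonzero $(1,1)$ entry; and $\sigma_1(B)>\sigma_2(B)$.
   Context: $e_1,\dots,e_n$ is the standard basis of $\mathbb C^n$ (column vectors), and $\sigma_1(B)\ge\sigma_2(B)\ge\dots$ denote the singular values of $B$. *)

theory Defs
  imports "Jordan_Normal_Form.Schur_Decomposition" "Jordan_Normal_Form.DL_Rank" "Jordan_Normal_Form.Gram_Schmidt"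
begin

definition outer_adj :: "complex vec \<Rightarrow> complex vec \<Rightarrow> complex mat" where
  "outer_adj u v = mat (dim_vec u) (dim_vec v) (\<lambda>(i,j). u $ i * cnj (v $ j))"

definition sing_vals :: "complex mat \<Rightarrow> real list" where
  "sing_vals A = (THE s. length s = dim_col A \<and> sorted_wrt (\<ge>) s \<and> (\<forall>t\<in>set s. t \<ge> 0) \<and>
     char_poly (mat_adjoint A * A) = (\<Prod>t\<leftarrow>s. [:- complex_of_real (t^2), 1:]))"

definition rank2_svd :: "nat \<Rightarrow> complex mat \<Rightarrow> real \<Rightarrow> real \<Rightarrow> complex vec \<Rightarrow> complex vec
    \<Rightarrow> complex vec \<Rightarrow> complex vec \<Rightarrow> bool" where
  "rank2_svd n B s1 s2 u1 u2 v1 v2 \<longleftrightarrow>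
     u1 \<in> carrier_vec n \<and> u2 \<in> carrier_vec n \<and> v1 \<in> carrier_vec n \<and> v2 \<in> carrier_vec n \<and>
     u1 \<bullet>c u1 = 1 \<and> u2 \<bullet>c u2 = 1 \<and> u1 \<bullet>c u2 = 0 \<and>
     v1 \<bullet>c v1 = 1 \<and> v2 \<bullet>c v2 = 1 \<and> v1 \<bullet>c v2 = 0 \<and>
     s1 \<ge> s2 \<and> s2 > 0 \<and>
     B = complex_of_real s1 \<cdot>\<^sub>m outer_adj u1 v1 + complex_of_real s2 \<cdot>\<^sub>m outer_adj u2 v2"

end

theory Submission
  imports Defs "Jordan_Normal_Form.DL_Rank_Submatrix"
begin

lemma sum_single_nz:
  fixes f :: "nat \<Rightarrow> complex"
  assumes "N < n" "\<And>k. k < n \<Longrightarrow> k \<noteq> N \<Longrightarrow> f k = 0"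
  shows "(\<Sum>k<n. f k) = f N"
proof -
  have "(\<Sum>k<n. f k) = (\<Sum>k\<in>{N}. f k)"
    by (rule sum.mono_neutral_right, insert assms, auto)
  thus ?thesis by simp
qed

lemma sum_delta_lt: "(N::nat) < n \<Longrightarrow> (\<Sum>k<n. (if k = N then a else 0) * (f k :: complex)) = a * f N"
  by (subst sum_single_nz[of N], auto)

lemma sum_delta_lt': "(N::nat) < n \<Longrightarrow> (\<Sum>k<n. (f k :: complex) * (if k = N then a else 0)) = f N * a"
  by (subst sum_single_nz[of N], auto)

lemma sprod_sum: "v \<in> carrier_vec n \<Longrightarrow> w \<in> carrier_vec n \<Longrightarrow> v \<bullet> w = (\<Sum>k<n. v $ k * w $ k)"
  unfolding scalar_prod_def by (auto simp: lessThan_atLeast0)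

lemma adj_index: "i < dim_col A \<Longrightarrow> j < dim_row A \<Longrightarrow> mat_adjoint A $$ (i,j) = cnj (A $$ (j,i))"
  "dim_row (mat_adjoint A) = dim_col A" "dim_col (mat_adjoint A) = dim_row A"
  unfolding mat_adjoint_def by (auto simp: mat_of_rows_def)

lemma poly2: fixes a b c d l1 l2 :: complex
  assumes "l1 + l2 = a + d" "l1 * l2 = a * d - b * c"
  shows "([:0,1:] + [:-a:]) * ([:0,1:] + [:-d:]) - [:-b:] * [:-c:] = [:-l1,1:] * [:-l2,1:]"
proof -
  have "([:0,1:] + [:-a:]) * ([:0,1:] + [:-d:]) - [:-b:] * [:-c:] = [:a*d - b*c, -(a+d), 1:]"
    by (simp add: algebra_simps)
  also have "\<dots> = [:l1*l2, -(l1+l2), 1:]" using assms by simp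
  also have "\<dots> = [:-l1,1:] * [:-l2,1:]" by (simp add: algebra_simps)
  finally show ?thesis .
qed

lemma split_last: "0 < (n::nat) \<Longrightarrow> (\<Sum>k<n. f k) = (\<Sum>k<n-1. f k) + (f (n-1) :: 'a :: comm_monoid_add)"
  using sum.lessThan_Suc[of f "n-1"] by simp

lemma cnj_mult_self: "cnj z * z = complex_of_real ((cmod z)^2)"
  by (metis complex_norm_square mult.commute)


lemma order_prod_lin:
  fixes l :: "complex list"
  shows "order a (\<Prod>t\<leftarrow>l. [:-t,1:]) = length (filter ((=) a) l)"
proof (induction l)
  case Nil
  then show ?case by (simp add: order_0I)
next
  case (Cons t l)
  have nz: "(\<Prod>t\<leftarrow>l. [:-t,1:]) \<noteq> 0" by (auto simp: prod_list_zero_iff)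
  have "order a ([:-t,1:] * (\<Prod>t\<leftarrow>l. [:-t,1:])) = order a [:-t,1:] + order a (\<Prod>t\<leftarrow>l. [:-t,1:])"
    by (rule order_mult, metis nz mult_eq_0_iff pCons_eq_0_iff one_neq_zero)
  moreover have "order a [:-t,1:] = (if a = t then 1 else 0)"
  proof (cases "a = t")
    case True then show ?thesis using order_power_n_n[of t 1] by simp
  next
    case False then show ?thesis by (simp, intro order_0I, auto)
  qed
  ultimately show ?case using Cons by auto
qed

lemma sorted_desc_mset_eq:
  fixes s t :: "real list"
  assumes "sorted_wrt (\<ge>) s" "sorted_wrt (\<ge>) t" "mset s = mset t"
  shows "s = t"
proof -
  have "sorted (rev s)" "sorted (rev t)" using assms(1,2) by (simp_all add: sorted_wrt_rev)
  moreover have "mset (rev s) = mset (rev t)" using assms(3) by simp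
  ultimately have "rev s = rev t" using properties_for_sort sorted_sort_id by metis
  thus ?thesis by simp
qed

lemma sing_vals_eq:
  assumes "length s = dim_col A" "sorted_wrt (\<ge>) s" "\<forall>t\<in>set s. t \<ge> 0"
    "char_poly (mat_adjoint A * A) = (\<Prod>t\<leftarrow>s. [:- complex_of_real (t^2), 1:])"
  shows "sing_vals A = s"
  unfolding sing_vals_def
proof (rule the_equality)
  show "length s = dim_col A \<and> sorted_wrt (\<ge>) s \<and> (\<forall>t\<in>set s. t \<ge> 0) \<and>
     char_poly (mat_adjoint A * A) = (\<Prod>t\<leftarrow>s. [:- complex_of_real (t^2), 1:])" using assms by auto
  fix r assume r: "length r = dim_col A \<and> sorted_wrt (\<ge>) r \<and> (\<forall>t\<in>set r. t \<ge> 0) \<and>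
     char_poly (mat_adjoint A * A) = (\<Prod>t\<leftarrow>r. [:- complex_of_real (t^2), 1:])"
  let ?f = "\<lambda>t::real. complex_of_real (t^2)"
  have eq: "(\<Prod>t\<leftarrow>map ?f r. [:- t, 1:]) = (\<Prod>t\<leftarrow>map ?f s. [:- t, 1:])"
    using r assms(4) by (simp add: comp_def)
  have "mset (map ?f r) = mset (map ?f s)"
  proof (rule multiset_eqI)
    fix a
    show "count (mset (map ?f r)) a = count (mset (map ?f s)) a"
      using arg_cong[OF eq, of "order a"] unfolding order_prod_lin count_mset count_list_eq_length_filter by simp
  qed
  hence im: "image_mset ?f (mset r) = image_mset ?f (mset s)" by simp
  have inj: "inj_on ?f (set_mset (mset r) \<union> set_mset (mset s))"
  proof (rule inj_onI)
    fix a b assume "a \<in> set_mset (mset r) \<union> set_mset (mset s)" "b \<in> set_mset (mset r) \<union> set_mset (mset s)" "?f a = ?f b"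
    hence "a \<ge> 0" "b \<ge> 0" "a^2 = b^2" using r assms(3) by (auto simp del: of_real_power)
    thus "a = b" by (simp add: power2_eq_iff_nonneg)
  qed
  from image_mset_eq_image_mset_plusD[of ?f "mset r" "mset s" "{#}"] im inj
  obtain C' where "mset r = mset s + C'" "{#} = image_mset ?f C'" by auto
  hence "mset r = mset s" by simp
  thus "r = s" using sorted_desc_mset_eq r assms(2) by blast
qed


lemma trace_id: fixes xN yN A B :: complex
  shows "(xN * yN + (B + cnj yN * yN)) + ((A + cnj xN * xN) + cnj xN * cnj yN) = A + B + (xN + cnj yN) * cnj (xN + cnj yN)"
  by (simp add: algebra_simps)
lemma det_id: fixes xN yN A B :: complex
  shows "(xN*yN + (B + cnj yN*yN)) * ((A + cnj xN*xN) + cnj xN*cnj yN) - (xN + cnj yN) * ((A + cnj xN*xN)*yN + cnj xN*(B + cnj yN*yN)) = A*B"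
  by (simp add: algebra_simps)
lemma det2: assumes A: "(A :: 'a :: comm_ring_1 mat) \<in> carrier_mat 2 2"
  shows "det A = A $$ (0,0) * A $$ (1,1) - A $$ (0,1) * A $$ (1,0)"
proof -
  have d: "\<And>i j. det (mat_delete A i j) = mat_delete A i j $$ (0,0)"
    by (rule det_single, insert mat_delete_carrier[OF A], auto)
  show ?thesis
    unfolding laplace_expansion_column[OF A, of 0, simplified] cofactor_def d
    using A by (simp add: numeral_2_eq_2 mat_delete_def insert_index_def)
qed


lemma sorted_rep0: "sorted_wrt (\<ge>) (replicate m (0::real))" by (induct m, auto)

definition "Nf rh be d = sqrt (rh * be^2 + d^2)"
definition "sf rh al d = sqrt (d + rh + al^2)"
definition "A1 rh al be d = complex_of_real (be * (rh + d) / (Nf rh be d * sf rh al d))"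
definition "A2 c rh al be d = complex_of_real (al * be / (Nf rh be d * sf rh al d)) * cnj c"
definition "B1 c rh be d = complex_of_real (be / Nf rh be d) * cnj c"
definition "B2 rh be d = complex_of_real (d / Nf rh be d)"

lemma cprod: "rh = (cmod c)^2 \<Longrightarrow> complex_of_real r * cnj c * cnj (complex_of_real s * cnj c) = complex_of_real (r * s * rh)"
proof -
  assume r: "rh = (cmod c)^2"
  have "complex_of_real rh = c * cnj c" unfolding r by (rule complex_norm_square)
  thus ?thesis by (simp add: algebra_simps)
qed

locale svd2 =
  fixes c :: complex and rh al be d1 d2 :: real
  assumes c0: "c \<noteq> 0" and rh: "rh = (cmod c)^2" and al: "al > 0" and be: "be > 0"
    and d12: "d1 > d2" and prod: "d1 * d2 = - rh * be^2" and sum: "d1 + d2 = be^2 - rh - al^2"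
    and l1: "d1 + rh + al^2 > 0" and l2: "d2 + rh + al^2 > 0"
begin

lemma rh_pos: "rh > 0" using rh c0 by simp

lemma root: "d = d1 \<or> d = d2 \<Longrightarrow> d^2 + (rh + al^2 - be^2) * d - rh * be^2 = 0"
proof -
  assume "d = d1 \<or> d = d2"
  hence "(d - d1) * (d - d2) = 0" by auto
  hence "d^2 - (d1 + d2) * d + d1 * d2 = 0" by (simp add: algebra_simps power2_eq_square)
  thus ?thesis unfolding sum prod by (simp add: algebra_simps)
qed

lemma Nsq: "(Nf rh be d)^2 = rh * be^2 + d^2" "Nf rh be d > 0"
proof -
  have "rh * be^2 + d^2 > 0" using rh_pos be by (simp add: add_pos_nonneg)
  thus "(Nf rh be d)^2 = rh * be^2 + d^2" "Nf rh be d > 0" unfolding Nf_def by auto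
qed

lemma ssq: "d = d1 \<or> d = d2 \<Longrightarrow> (sf rh al d)^2 = d + rh + al^2 \<and> sf rh al d > 0"
  unfolding sf_def using l1 l2 by auto

lemma normA: assumes d: "d = d1 \<or> d = d2"
  shows "A1 rh al be d * cnj (A1 rh al be d) + A2 c rh al be d * cnj (A2 c rh al be d) = 1"
proof -
  let ?N = "Nf rh be d" and ?s = "sf rh al d"
  have N: "?N^2 = rh * be^2 + d^2" "?N > 0" using Nsq by auto
  have s: "?s^2 = d + rh + al^2" "?s > 0" using ssq[OF d] by auto
  have key: "be^2 * (rh + d)^2 + al^2 * be^2 * rh = (rh * be^2 + d^2) * (d + rh + al^2)"
  proof -
    have "be^2 * (rh + d)^2 + al^2 * be^2 * rh - (rh * be^2 + d^2) * (d + rh + al^2)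
      = - d * (d^2 + (rh + al^2 - be^2) * d - rh * be^2)"
      by (simp add: algebra_simps power2_eq_square)
    thus ?thesis using root[OF d] by simp
  qed
  have "A1 rh al be d * cnj (A1 rh al be d) + A2 c rh al be d * cnj (A2 c rh al be d)
    = complex_of_real ((be * (rh + d) / (?N * ?s))^2 + (al * be / (?N * ?s)) * (al * be / (?N * ?s)) * rh)"
    unfolding A1_def A2_def cprod[OF rh] by (simp add: power2_eq_square)
  also have "(be * (rh + d) / (?N * ?s))^2 + (al * be / (?N * ?s)) * (al * be / (?N * ?s)) * rh
     = (be^2 * (rh + d)^2 + al^2 * be^2 * rh) / (?N^2 * ?s^2)"
    using N(2) s(2) by (simp add: field_simps power2_eq_square)
  also have "\<dots> = 1"
  proof -
    have "be^2 * (rh + d)^2 + al^2 * be^2 * rh = ?N^2 * ?s^2" unfolding key N s ..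
    thus ?thesis using N(2) s(2) by simp
  qed
  finally show ?thesis by simp
qed


lemma cprod': "complex_of_real r * (complex_of_real a * cnj c) * cnj (complex_of_real b * cnj c) = complex_of_real (r * a * b * rh)"
proof -
  have e: "c * cnj c = complex_of_real rh" unfolding rh by (rule complex_norm_square[symmetric])
  have "complex_of_real r * (complex_of_real a * cnj c) * cnj (complex_of_real b * cnj c) = complex_of_real (r * a * b) * (c * cnj c)"
    by (simp add: algebra_simps)
  thus ?thesis unfolding e by simp
qed

lemma cnj_of_real_mult: "cnj (complex_of_real s * cnj c) = complex_of_real s * c" by simp

lemma normB: "B1 c rh be d * cnj (B1 c rh be d) + B2 rh be d * cnj (B2 rh be d) = 1"
proof -
  let ?N = "Nf rh be d"
  have N: "?N^2 = rh * be^2 + d^2" "?N > 0" using Nsq by auto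
  have "B1 c rh be d * cnj (B1 c rh be d) + B2 rh be d * cnj (B2 rh be d)
     = complex_of_real ((be / ?N) * (be / ?N) * rh + (d / ?N) * (d / ?N))"
    unfolding B1_def B2_def cprod[OF rh] by simp
  also have "(be / ?N) * (be / ?N) * rh + (d / ?N) * (d / ?N) = (rh * be^2 + d^2) / ?N^2"
    using N(2) by (simp add: field_simps power2_eq_square)
  also have "\<dots> = 1" unfolding N(1)[symmetric] using N(2) by simp
  finally show ?thesis by simp
qed

abbreviation "N1 \<equiv> Nf rh be d1"
abbreviation "N2 \<equiv> Nf rh be d2"
abbreviation "s1 \<equiv> sf rh al d1"
abbreviation "s2 \<equiv> sf rh al d2"

lemma pos: "N1 > 0" "N2 > 0" "s1 > 0" "s2 > 0" using Nsq ssq by auto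

lemma orthA: "A1 rh al be d1 * cnj (A1 rh al be d2) + A2 c rh al be d1 * cnj (A2 c rh al be d2) = 0"
proof -
  have "A1 rh al be d1 * cnj (A1 rh al be d2) + A2 c rh al be d1 * cnj (A2 c rh al be d2)
    = complex_of_real ((be * (rh + d1) / (N1 * s1)) * (be * (rh + d2) / (N2 * s2)) + (al * be / (N1 * s1)) * (al * be / (N2 * s2)) * rh)"
    unfolding A1_def A2_def cprod[OF rh] by simp
  also have "(be * (rh + d1) / (N1 * s1)) * (be * (rh + d2) / (N2 * s2)) + (al * be / (N1 * s1)) * (al * be / (N2 * s2)) * rh
     = be^2 * ((rh + d1) * (rh + d2) + al^2 * rh) / (N1 * s1 * N2 * s2)"
    using pos by (simp add: field_simps power2_eq_square)
  also have "(rh + d1) * (rh + d2) + al^2 * rh = rh^2 + rh * (d1 + d2) + d1 * d2 + al^2 * rh"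
    by (simp add: algebra_simps power2_eq_square)
  also have "\<dots> = 0" unfolding sum prod by (simp add: algebra_simps power2_eq_square)
  finally show ?thesis by simp
qed

lemma orthB: "B1 c rh be d1 * cnj (B1 c rh be d2) + B2 rh be d1 * cnj (B2 rh be d2) = 0"
proof -
  have "B1 c rh be d1 * cnj (B1 c rh be d2) + B2 rh be d1 * cnj (B2 rh be d2)
    = complex_of_real ((be / N1) * (be / N2) * rh + (d1 / N1) * (d2 / N2))"
    unfolding B1_def B2_def cprod[OF rh] by simp
  also have "(be / N1) * (be / N2) * rh + (d1 / N1) * (d2 / N2) = (rh * be^2 + d1 * d2) / (N1 * N2)"
    using pos by (simp add: field_simps power2_eq_square)
  also have "\<dots> = 0" unfolding prod by simp
  finally show ?thesis by simp
qed

lemma d_nz: "d1 \<noteq> 0" "d2 \<noteq> 0" "d1 - d2 \<noteq> 0"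
proof -
  have "d1 * d2 \<noteq> 0" unfolding prod using rh_pos be by simp
  thus "d1 \<noteq> 0" "d2 \<noteq> 0" by auto
  show "d1 - d2 \<noteq> 0" using d12 by simp
qed

lemma N1sq: "N1^2 = d1 * (d1 - d2)" using Nsq(1)[of d1] prod by (simp add: algebra_simps power2_eq_square)
lemma N2sq: "N2^2 = d2 * (d2 - d1)" using Nsq(1)[of d2] prod by (simp add: algebra_simps power2_eq_square)

lemma sums: "1 / N1^2 + 1 / N2^2 = 1 / (rh * be^2)" "d1 / N1^2 + d2 / N2^2 = 0" "d1^2 / N1^2 + d2^2 / N2^2 = 1"
proof -
  have a: "d1 - d2 \<noteq> 0" "d2 - d1 \<noteq> 0" using d12 by auto
  show "1 / N1^2 + 1 / N2^2 = 1 / (rh * be^2)"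
  proof -
    have nz: "N1^2 \<noteq> 0" "N2^2 \<noteq> 0" using pos by auto
    have "1 / N1^2 + 1 / N2^2 = (N1^2 + N2^2) / (N1^2 * N2^2)" using nz by (simp add: field_simps)
    also have "N1^2 + N2^2 = (d1 - d2)^2" unfolding N1sq N2sq by (simp add: algebra_simps power2_eq_square)
    also have "N1^2 * N2^2 = (rh * be^2) * (d1 - d2)^2" unfolding N1sq N2sq
    proof -
      have "d1 * (d1 - d2) * (d2 * (d2 - d1)) = - (d1 * d2) * (d1 - d2)^2" by (simp add: algebra_simps power2_eq_square)
      thus "d1 * (d1 - d2) * (d2 * (d2 - d1)) = (rh * be^2) * (d1 - d2)^2" unfolding prod by simp
    qed
    also have "(d1 - d2)^2 / ((rh * be^2) * (d1 - d2)^2) = 1 / (rh * be^2)" using a by simp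
    finally show ?thesis .
  qed
  show "d1 / N1^2 + d2 / N2^2 = 0" unfolding N1sq N2sq using d_nz a by (simp add: field_simps)
  have b: "d1 * (d1 - d2) \<noteq> 0" "d2 * (d2 - d1) \<noteq> 0" using d_nz a by auto
  have "d1^2 / N1^2 + d2^2 / N2^2 = d1 / (d1 - d2) + d2 / (d2 - d1)" unfolding N1sq N2sq using d_nz
    by (simp add: power2_eq_square)
  also have "d2 / (d2 - d1) = - (d2 / (d1 - d2))" by (metis minus_diff_eq divide_minus_right)
  also have "d1 / (d1 - d2) + - (d2 / (d1 - d2)) = (d1 - d2) / (d1 - d2)" by (metis diff_divide_distrib diff_conv_add_uminus)
  also have "\<dots> = 1" using a by simp
  finally show "d1^2 / N1^2 + d2^2 / N2^2 = 1" .
qed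

lemma G11: "complex_of_real s1 * A1 rh al be d1 * cnj (B1 c rh be d1) + complex_of_real s2 * A1 rh al be d2 * cnj (B1 c rh be d2) = c"
proof -
  have "complex_of_real s1 * A1 rh al be d1 * cnj (B1 c rh be d1) + complex_of_real s2 * A1 rh al be d2 * cnj (B1 c rh be d2)
    = complex_of_real (s1 * (be * (rh + d1) / (N1 * s1)) * (be / N1) + s2 * (be * (rh + d2) / (N2 * s2)) * (be / N2)) * c"
    unfolding A1_def B1_def by (simp add: algebra_simps)
  also have "s1 * (be * (rh + d1) / (N1 * s1)) * (be / N1) + s2 * (be * (rh + d2) / (N2 * s2)) * (be / N2)
     = be^2 * (rh * (1 / N1^2 + 1 / N2^2) + (d1 / N1^2 + d2 / N2^2))"
    using pos by (simp add: field_simps power2_eq_square)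
  also have "\<dots> = 1" unfolding sums using rh_pos be by simp
  finally show ?thesis by simp
qed

lemma G12: "complex_of_real s1 * A1 rh al be d1 * cnj (B2 rh be d1) + complex_of_real s2 * A1 rh al be d2 * cnj (B2 rh be d2) = complex_of_real be"
proof -
  have "complex_of_real s1 * A1 rh al be d1 * cnj (B2 rh be d1) + complex_of_real s2 * A1 rh al be d2 * cnj (B2 rh be d2)
    = complex_of_real (s1 * (be * (rh + d1) / (N1 * s1)) * (d1 / N1) + s2 * (be * (rh + d2) / (N2 * s2)) * (d2 / N2))"
    unfolding A1_def B2_def by simp
  also have "s1 * (be * (rh + d1) / (N1 * s1)) * (d1 / N1) + s2 * (be * (rh + d2) / (N2 * s2)) * (d2 / N2)
     = be * (rh * (d1 / N1^2 + d2 / N2^2) + (d1^2 / N1^2 + d2^2 / N2^2))"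
    using pos by (simp add: field_simps power2_eq_square)
  also have "\<dots> = be" unfolding sums by simp
  finally show ?thesis by simp
qed

lemma G21: "complex_of_real s1 * A2 c rh al be d1 * cnj (B1 c rh be d1) + complex_of_real s2 * A2 c rh al be d2 * cnj (B1 c rh be d2) = complex_of_real al"
proof -
  have "complex_of_real s1 * A2 c rh al be d1 * cnj (B1 c rh be d1) + complex_of_real s2 * A2 c rh al be d2 * cnj (B1 c rh be d2)
    = complex_of_real (s1 * (al * be / (N1 * s1)) * (be / N1) * rh + s2 * (al * be / (N2 * s2)) * (be / N2) * rh)"
    unfolding A2_def B1_def cprod' by simp
  also have "s1 * (al * be / (N1 * s1)) * (be / N1) * rh + s2 * (al * be / (N2 * s2)) * (be / N2) * rh
     = al * (rh * be^2) * (1 / N1^2 + 1 / N2^2)"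
    using pos by (simp add: field_simps power2_eq_square)
  also have "\<dots> = al" unfolding sums using rh_pos be by simp
  finally show ?thesis by simp
qed

lemma G22: "complex_of_real s1 * A2 c rh al be d1 * cnj (B2 rh be d1) + complex_of_real s2 * A2 c rh al be d2 * cnj (B2 rh be d2) = 0"
proof -
  have "complex_of_real s1 * A2 c rh al be d1 * cnj (B2 rh be d1) + complex_of_real s2 * A2 c rh al be d2 * cnj (B2 rh be d2)
    = complex_of_real (s1 * (al * be / (N1 * s1)) * (d1 / N1) + s2 * (al * be / (N2 * s2)) * (d2 / N2)) * cnj c"
    unfolding A2_def B2_def by (simp add: algebra_simps)
  also have "s1 * (al * be / (N1 * s1)) * (d1 / N1) + s2 * (al * be / (N2 * s2)) * (d2 / N2)
     = al * be * (d1 / N1^2 + d2 / N2^2)"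
    using pos by (simp add: field_simps power2_eq_square)
  also have "\<dots> = 0" unfolding sums by simp
  finally show ?thesis by simp
qed

end

lemma cip: assumes "u \<in> carrier_vec n" "v \<in> carrier_vec n"
  shows "u \<bullet>c v = (\<Sum>j<n. u $ j * cnj (v $ j))"
  using assms unfolding scalar_prod_def by (auto intro: sum.cong simp: lessThan_atLeast0)

lemma svd_entry: assumes "rank2_svd n B s1 s2 u1 u2 v1 v2" "i < n" "j < n"
  shows "B $$ (i,j) = of_real s1 * u1$i * cnj (v1$j) + of_real s2 * u2$i * cnj (v2$j)"
  using assms unfolding rank2_svd_def outer_adj_def by auto

lemma svd_eqs: assumes S: "rank2_svd n B s1 s2 u1 u2 v1 v2" and i: "i < n"
  shows "(\<Sum>j<n. B$$(i,j) * v1$j) = of_real s1 * u1$i"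
    "(\<Sum>j<n. B$$(i,j) * v2$j) = of_real s2 * u2$i"
    "(\<Sum>k<n. cnj (B$$(k,i)) * u1$k) = of_real s1 * v1$i"
    "(\<Sum>k<n. cnj (B$$(k,i)) * u2$k) = of_real s2 * v2$i"
proof -
  from S have c: "u1 \<in> carrier_vec n" "u2 \<in> carrier_vec n" "v1 \<in> carrier_vec n" "v2 \<in> carrier_vec n"
    and o: "u1 \<bullet>c u1 = 1" "u2 \<bullet>c u2 = 1" "u1 \<bullet>c u2 = 0" "v1 \<bullet>c v1 = 1" "v2 \<bullet>c v2 = 1" "v1 \<bullet>c v2 = 0"
    unfolding rank2_svd_def by auto
  have o2: "(\<Sum>j<n. u1$j * cnj (u1$j)) = 1" "(\<Sum>j<n. u2$j * cnj (u2$j)) = 1" 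
     "(\<Sum>j<n. u1$j * cnj (u2$j)) = 0" "(\<Sum>j<n. v1$j * cnj (v1$j)) = 1" "(\<Sum>j<n. v2$j * cnj (v2$j)) = 1"
     "(\<Sum>j<n. v1$j * cnj (v2$j)) = 0"
    using o cip c by metis+
  have o3: "(\<Sum>j<n. u2$j * cnj (u1$j)) = 0" "(\<Sum>j<n. v2$j * cnj (v1$j)) = 0"
  proof -
    have "(\<Sum>j<n. u2$j * cnj (u1$j)) = cnj (\<Sum>j<n. u1$j * cnj (u2$j))" by (simp add: mult.commute)
    thus "(\<Sum>j<n. u2$j * cnj (u1$j)) = 0" using o2 by simp
    have "(\<Sum>j<n. v2$j * cnj (v1$j)) = cnj (\<Sum>j<n. v1$j * cnj (v2$j))" by (simp add: mult.commute)
    thus "(\<Sum>j<n. v2$j * cnj (v1$j)) = 0" using o2 by simp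
  qed
  have E: "\<And>i j. i < n \<Longrightarrow> j < n \<Longrightarrow> B $$ (i,j) = of_real s1 * u1$i * cnj (v1$j) + of_real s2 * u2$i * cnj (v2$j)"
    using svd_entry[OF S] by blast
  have "(\<Sum>j<n. B$$(i,j) * v1$j) = (\<Sum>j<n. of_real s1 * u1$i * (v1$j * cnj (v1$j)) + of_real s2 * u2$i * (v1$j * cnj (v2$j)))"
    by (rule sum.cong, auto simp: E i algebra_simps)
  also have "\<dots> = of_real s1 * u1$i" by (simp add: sum.distrib sum_distrib_left[symmetric] o2)
  finally show "(\<Sum>j<n. B$$(i,j) * v1$j) = of_real s1 * u1$i" .
  have "(\<Sum>j<n. B$$(i,j) * v2$j) = (\<Sum>j<n. of_real s1 * u1$i * (v2$j * cnj (v1$j)) + of_real s2 * u2$i * (v2$j * cnj (v2$j)))"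
    by (rule sum.cong, auto simp: E i algebra_simps)
  also have "\<dots> = of_real s2 * u2$i" by (simp add: sum.distrib sum_distrib_left[symmetric] o2 o3)
  finally show "(\<Sum>j<n. B$$(i,j) * v2$j) = of_real s2 * u2$i" .
  have "(\<Sum>k<n. cnj (B$$(k,i)) * u1$k) = (\<Sum>k<n. of_real s1 * v1$i * (u1$k * cnj (u1$k)) + of_real s2 * v2$i * (u1$k * cnj (u2$k)))"
    by (rule sum.cong, auto simp: E i algebra_simps)
  also have "\<dots> = of_real s1 * v1$i" by (simp add: sum.distrib sum_distrib_left[symmetric] o2)
  finally show "(\<Sum>k<n. cnj (B$$(k,i)) * u1$k) = of_real s1 * v1$i" .
  have "(\<Sum>k<n. cnj (B$$(k,i)) * u2$k) = (\<Sum>k<n. of_real s1 * v1$i * (u2$k * cnj (u1$k)) + of_real s2 * v2$i * (u2$k * cnj (u2$k)))"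
    by (rule sum.cong, auto simp: E i algebra_simps)
  also have "\<dots> = of_real s2 * v2$i" by (simp add: sum.distrib sum_distrib_left[symmetric] o2 o3)
  finally show "(\<Sum>k<n. cnj (B$$(k,i)) * u2$k) = of_real s2 * v2$i" .
qed

lemma svd_pair:
  fixes n :: nat and x y u v :: "nat \<Rightarrow> complex" and s :: complex
  assumes n2: "n \<ge> 2" and x0: "x 0 \<noteq> 0" and y0: "y 0 \<noteq> 0" and c0: "x (n-1) + cnj (y (n-1)) \<noteq> 0"
    and s0: "s \<noteq> 0" and unz: "\<exists>i<n. u i \<noteq> 0"
    and Bv: "\<And>i. i < n \<Longrightarrow> s * u i = x i * v (n-1) + (if i = n - 1 then (\<Sum>j<n. cnj (y j) * v j) else 0)"
    and Bu: "\<And>i. i < n \<Longrightarrow> s * v i = (if i = n - 1 then (\<Sum>k<n. cnj (x k) * u k) else 0) + y i * u (n-1)"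
  shows "u 0 \<noteq> 0 \<and> v 0 \<noteq> 0"
proof -
  let ?N = "n - 1"
  have N: "?N < n" "0 < n" "0 \<noteq> ?N" using n2 by auto
  have vN: "v ?N \<noteq> 0"
  proof
    assume vz: "v ?N = 0"
    have uk: "u k = 0" if "k < n" "k \<noteq> ?N" for k using Bv[OF that(1)] that vz s0 by auto
    have "(\<Sum>k<n. cnj (x k) * u k) = cnj (x ?N) * u ?N"
      by (rule sum_single_nz, insert N uk, auto)
    hence "0 = (cnj (x ?N) + y ?N) * u ?N" using Bu[OF N(1)] vz by (simp add: algebra_simps)
    moreover have "cnj (x ?N) + y ?N \<noteq> 0" using c0
      by (metis complex_cnj_add complex_cnj_cnj complex_cnj_zero)
    ultimately have "u ?N = 0" by simp
    with uk unz show False by (metis)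
  qed
  have uN: "u ?N \<noteq> 0"
  proof
    assume uz: "u ?N = 0"
    have vk: "v k = 0" if "k < n" "k \<noteq> ?N" for k using Bu[OF that(1)] that uz s0 by auto
    have "(\<Sum>j<n. cnj (y j) * v j) = cnj (y ?N) * v ?N"
      by (rule sum_single_nz, insert N vk, auto)
    hence "0 = (x ?N + cnj (y ?N)) * v ?N" using Bv[OF N(1)] uz by (simp add: algebra_simps)
    with c0 vN show False by simp
  qed
  have "s * u 0 = x 0 * v ?N" using Bv[OF N(2)] N by simp
  hence "u 0 \<noteq> 0" using x0 vN by auto
  moreover have "s * v 0 = y 0 * u ?N" using Bu[OF N(2)] N by simp
  hence "v 0 \<noteq> 0" using y0 uN by auto
  ultimately show ?thesis by simp
qed

lemma rank_outer_le1: assumes "u \<in> carrier_vec n" "v \<in> carrier_vec n"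
  shows "vec_space.rank n (outer_adj u v) \<le> 1"
  by (rule vec_space.rank_le_1_product_entries[where f="\<lambda>i. u $ i" and g="\<lambda>j. cnj (v $ j)" and nc=n],
      insert assms, auto simp: outer_adj_def)

lemma rank_two:
  fixes B :: "complex mat"
  assumes n2: "n \<ge> 2" and xc: "x \<in> carrier_vec n" and yc: "y \<in> carrier_vec n"
    and B: "B = outer_adj x (unit_vec n (n - 1)) + outer_adj (unit_vec n (n - 1)) y"
    and a: "B $$ (0, n - 1) \<noteq> 0" and b: "B $$ (n - 1, 0) \<noteq> 0"
  shows "vec_space.rank n B = 2"
proof -
  have Bc: "B \<in> carrier_mat n n" using B xc yc unfolding outer_adj_def by auto
  have "vec_space.rank n B \<le> vec_space.rank n (outer_adj x (unit_vec n (n - 1))) + vec_space.rank n (outer_adj (unit_vec n (n - 1)) y)"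
    unfolding B by (rule vec_space.rank_subadditive[where nc=n], insert xc yc, auto simp: outer_adj_def)
  also have "\<dots> \<le> 2" using rank_outer_le1[OF xc, of "unit_vec n (n-1)"] rank_outer_le1[OF _ yc, of "unit_vec n (n-1)"] by auto
  finally have le: "vec_space.rank n B \<le> 2" .
  let ?I = "{0, n - 1}"
  have card: "card {i. i < n \<and> i \<in> ?I} = 2" using n2
    by (subgoal_tac "{i. i < n \<and> i \<in> ?I} = ?I", auto)
  have p0: "pick ?I 0 = 0" using pick_card_in_set[of 0 ?I] by simp
  have "card {a \<in> ?I. a < n - 1} = 1" using n2 by (subgoal_tac "{a \<in> ?I. a < n - 1} = {0}", auto)
  hence p1: "pick ?I 1 = n - 1" using pick_card_in_set[of "n-1" ?I] by simp
  have S: "submatrix B ?I ?I \<in> carrier_mat 2 2" using Bc card unfolding submatrix_def by auto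
  have ix: "\<And>i j. i < 2 \<Longrightarrow> j < 2 \<Longrightarrow> submatrix B ?I ?I $$ (i,j) = B $$ (pick ?I i, pick ?I j)"
    by (rule submatrix_index, insert Bc card, auto)
  have B00: "B $$ (0,0) = 0" using B xc yc n2 unfolding outer_adj_def by auto
  have "det (submatrix B ?I ?I) = - (B $$ (0, n-1) * B $$ (n-1, 0))"
    unfolding det2[OF S] using ix[of 0 0] ix[of 0 1] ix[of 1 0] ix[of 1 1] p0 p1 B00 by simp
  hence "det (submatrix B ?I ?I) \<noteq> 0" using a b by simp
  from vec_space.rank_gt_minor[OF Bc this] card have "2 \<le> vec_space.rank n B" by simp
  with le show ?thesis by simp
qed


lemma ring4: "s1 * (p1 * X * cnj (q1 * Y)) + s2 * (p2 * X * cnj (q2 * Y)) = (s1 * p1 * cnj q1 + s2 * p2 * cnj q2) * X * cnj (Y::complex)"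
  by (simp add: algebra_simps)

locale setting =
  fixes n :: nat and x y :: "complex vec"
  assumes n2: "n \<ge> 2" and xc: "x \<in> carrier_vec n" and yc: "y \<in> carrier_vec n"
    and x0: "x $ 0 \<noteq> 0" and y0: "y $ 0 \<noteq> 0"
    and c0: "x $ (n-1) + cnj (y $ (n-1)) \<noteq> 0"
begin

abbreviation "N \<equiv> n - 1"

definition BB where "BB = outer_adj x (unit_vec n (n - 1)) + outer_adj (unit_vec n (n - 1)) y"

lemma dimx[simp]: "dim_vec x = n" and dimy[simp]: "dim_vec y = n" using xc yc by auto

lemma BB_carrier[simp]: "BB \<in> carrier_mat n n"
  unfolding BB_def outer_adj_def by auto

lemma BB_dims[simp]: "dim_row BB = n" "dim_col BB = n" using BB_carrier unfolding carrier_mat_def by blast+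

lemma BB_index: "i < n \<Longrightarrow> j < n \<Longrightarrow> BB $$ (i,j) =
   (if j = N then x $ i else 0) + (if i = N then cnj (y $ j) else 0)"
  unfolding BB_def outer_adj_def by auto

lemma Nn[simp]: "N < n" "0 < n" "0 \<noteq> N" "1 < n" using n2 by auto

definition Sy :: "complex vec \<Rightarrow> complex" where "Sy w = (\<Sum>j<n. cnj (y $ j) * w $ j)"
definition X2 :: complex where "X2 = (\<Sum>k<n. cnj (x $ k) * x $ k)"

lemma BB_mv: assumes w: "w \<in> carrier_vec n"
  shows "BB *\<^sub>v w = vec n (\<lambda>i. x $ i * w $ N + (if i = N then Sy w else 0))"
proof (rule eq_vecI)
  fix i assume "i < dim_vec (vec n (\<lambda>i. x $ i * w $ N + (if i = N then Sy w else 0)))"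
  hence i: "i < n" by simp
  have "(BB *\<^sub>v w) $ i = (\<Sum>j<n. BB $$ (i,j) * w $ j)"
    using i w by (simp add: sprod_sum[of _ n])
  also have "\<dots> = (\<Sum>j<n. (if j = N then x $ i else 0) * w $ j + (if i = N then cnj (y $ j) * w $ j else 0))"
    by (rule sum.cong, auto simp: BB_index i algebra_simps)
  also have "\<dots> = x $ i * w $ N + (if i = N then Sy w else 0)"
    by (simp add: sum.distrib sum_delta_lt Sy_def)
  finally show "(BB *\<^sub>v w) $ i = vec n (\<lambda>i. x $ i * w $ N + (if i = N then Sy w else 0)) $ i" by (simp only: index_vec[OF i])
qed auto

lemma adj_mv: assumes w: "w \<in> carrier_vec n"
  shows "mat_adjoint BB *\<^sub>v w = vec n (\<lambda>i. (if i = N then (\<Sum>k<n. cnj (x $ k) * w $ k) else 0) + y $ i * w $ N)"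
proof (rule eq_vecI)
  fix i assume "i < dim_vec (vec n (\<lambda>i. (if i = N then (\<Sum>k<n. cnj (x $ k) * w $ k) else 0) + y $ i * w $ N))"
  hence i: "i < n" by simp
  have "(mat_adjoint BB *\<^sub>v w) $ i = row (mat_adjoint BB) i \<bullet> w" using i by (intro index_mult_mat_vec, simp add: adj_index)
  also have "\<dots> = (\<Sum>k<n. row (mat_adjoint BB) i $ k * w $ k)"
    by (rule sprod_sum[OF carrier_vecI w], simp add: adj_index)
  also have "\<dots> = (\<Sum>k<n. cnj (BB $$ (k,i)) * w $ k)"
    by (rule sum.cong, auto simp: i adj_index)
  also have "\<dots> = (\<Sum>k<n. (if i = N then cnj (x $ k) * w $ k else 0) + (if k = N then y $ i else 0) * w $ k)"
    by (rule sum.cong, auto simp: BB_index i algebra_simps)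
  also have "\<dots> = (if i = N then (\<Sum>k<n. cnj (x $ k) * w $ k) else 0) + y $ i * w $ N"
    by (simp only: sum.distrib sum_delta_lt Nn, simp)
  finally show "(mat_adjoint BB *\<^sub>v w) $ i = vec n (\<lambda>i. (if i = N then (\<Sum>k<n. cnj (x $ k) * w $ k) else 0) + y $ i * w $ N) $ i" by (simp only: index_vec[OF i])
qed (auto simp: adj_index)

definition HH where "HH = mat_adjoint BB * BB"

lemma adj_carrier[simp]: "mat_adjoint BB \<in> carrier_mat n n"
  by (rule carrier_matI, simp_all add: adj_index)

lemma HH_carrier[simp]: "HH \<in> carrier_mat n n" unfolding HH_def by (rule mult_carrier_mat[OF adj_carrier BB_carrier])

definition alp :: "complex vec \<Rightarrow> complex" where "alp w = X2 * w $ N + cnj (x $ N) * Sy w"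
definition bet :: "complex vec \<Rightarrow> complex" where "bet w = x $ N * w $ N + Sy w"

lemma HH_mv: assumes w: "w \<in> carrier_vec n"
  shows "HH *\<^sub>v w = vec n (\<lambda>i. (if i = N then alp w else 0) + y $ i * bet w)"
proof -
  have ad: "mat_adjoint BB \<in> carrier_mat n n" by simp
  have "HH *\<^sub>v w = mat_adjoint BB *\<^sub>v (BB *\<^sub>v w)" unfolding HH_def
    by (rule assoc_mult_mat_vec[OF ad BB_carrier w])
  also have "\<dots> = vec n (\<lambda>i. (if i = N then alp w else 0) + y $ i * bet w)"
  proof -
    have s: "(\<Sum>k<n. cnj (x $ k) * vec n (\<lambda>i. x $ i * w $ N + (if i = N then Sy w else 0)) $ k) = alp w"
    proof -
      have "(\<Sum>k<n. cnj (x $ k) * vec n (\<lambda>i. x $ i * w $ N + (if i = N then Sy w else 0)) $ k)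
        = (\<Sum>k<n. (cnj (x $ k) * x $ k) * w $ N + cnj (x $ k) * (if k = N then Sy w else 0))" (is "_ = ?r")
        by (rule sum.cong, auto simp: algebra_simps)
      also have "?r = alp w" 
        unfolding sum.distrib sum_distrib_right[symmetric] sum_delta_lt'[OF Nn(1)] alp_def X2_def by simp
      finally show ?thesis .
    qed
    have vc: "vec n (\<lambda>i. x $ i * w $ N + (if i = N then Sy w else 0)) \<in> carrier_vec n" by simp
    show ?thesis unfolding BB_mv[OF w] adj_mv[OF vc] s index_vec[OF Nn(1)] bet_def by simp
  qed
  finally show ?thesis .
qed


definition PP where "PP = mat n n (\<lambda>(k,j). if j = 0 then y$k else if j = 1 then (if k = N then 1 else 0) else (if k = j - 1 then 1 else 0))"
definition QQ where "QQ = mat n n (\<lambda>(j,k). if j = 0 then (if k = 0 then 1 / y$0 else 0)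
   else if j = 1 then (if k = N then 1 else 0) - (if k = 0 then y$N / y$0 else 0)
   else (if k = j - 1 then 1 else 0) - (if k = 0 then y$(j-1) / y$0 else 0))"

lemma PP_carrier[simp]: "PP \<in> carrier_mat n n" unfolding PP_def by simp
lemma QQ_carrier[simp]: "QQ \<in> carrier_mat n n" unfolding QQ_def by simp
lemma PQ_dims[simp]: "dim_row PP = n" "dim_col PP = n" "dim_row QQ = n" "dim_col QQ = n" unfolding PP_def QQ_def by auto

lemma sum_two_delta: assumes "(a::nat) < n" shows "(\<Sum>k<n. ((if k = a then c else 0) - (if k = 0 then d else 0)) * (f k :: complex)) = c * f a - d * f 0"
proof -
  have "(\<Sum>k<n. ((if k = a then c else 0) - (if k = 0 then d else 0)) * (f k :: complex)) = 
    (\<Sum>k<n. (if k = a then c else 0) * f k) - (\<Sum>k<n. (if k = 0 then d else 0) * f k)"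
    by (simp only: left_diff_distrib sum_subtractf)
  also have "\<dots> = c * f a - d * f 0" using assms by (simp add: sum_delta_lt[OF assms] sum_delta_lt[of 0 n])
  finally show ?thesis .
qed

lemma QP: "QQ * PP = 1\<^sub>m n"
proof (rule eq_matI)
  fix i j assume "i < dim_row (1\<^sub>m n :: complex mat)" "j < dim_col (1\<^sub>m n :: complex mat)"
  hence i: "i < n" and j: "j < n" by auto
  have "(QQ * PP) $$ (i,j) = row QQ i \<bullet> col PP j" using i j by simp
  also have "\<dots> = (\<Sum>k<n. QQ $$ (i,k) * PP $$ (k,j))"
    by (subst sprod_sum[of _ n], insert i j, auto intro!: sum.cong)
  also have "\<dots> = 1\<^sub>m n $$ (i,j)"
  proof -
    consider (a) "i = 0" | (b) "i = 1" | (c) "i \<ge> 2" by linarith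
    then show ?thesis
    proof cases
      case a
      have "(\<Sum>k<n. QQ $$ (i,k) * PP $$ (k,j)) = (\<Sum>k<n. (if k = 0 then 1 / y$0 else 0) * PP $$ (k,j))"
        by (rule sum.cong, insert i a, auto simp: QQ_def)
      also have "\<dots> = 1 / y$0 * PP $$ (0,j)" by (rule sum_delta_lt, simp)
      also have "\<dots> = 1\<^sub>m n $$ (i,j)" using j i a y0 n2 by (auto simp: PP_def)
      finally show ?thesis .
    next
      case b
      have "(\<Sum>k<n. QQ $$ (i,k) * PP $$ (k,j)) = (\<Sum>k<n. ((if k = N then 1 else 0) - (if k = 0 then y$N / y$0 else 0)) * PP $$ (k,j))"
        by (rule sum.cong, insert i b, auto simp: QQ_def)
      also have "\<dots> = 1 * PP $$ (N,j) - y$N / y$0 * PP $$ (0,j)" by (rule sum_two_delta, simp)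
      also have "\<dots> = 1\<^sub>m n $$ (i,j)" using j i b y0 n2 by (auto simp: PP_def)
      finally show ?thesis .
    next
      case c
      have "(\<Sum>k<n. QQ $$ (i,k) * PP $$ (k,j)) = (\<Sum>k<n. ((if k = i - 1 then 1 else 0) - (if k = 0 then y$(i-1) / y$0 else 0)) * PP $$ (k,j))"
        by (rule sum.cong, insert i c, auto simp: QQ_def)
      also have "\<dots> = 1 * PP $$ (i-1,j) - y$(i-1) / y$0 * PP $$ (0,j)" by (rule sum_two_delta, insert i, simp)
      also have "\<dots> = 1\<^sub>m n $$ (i,j)" using j i c y0 n2 by (auto simp: PP_def)
      finally show ?thesis .
    qed
  qed
  finally show "(QQ * PP) $$ (i,j) = 1\<^sub>m n $$ (i,j)" .
qed auto

lemma PQ: "PP * QQ = 1\<^sub>m n"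
  by (rule mat_mult_left_right_inverse[OF QQ_carrier PP_carrier QP])


lemma colP0: "col PP 0 = y" by (rule eq_vecI, auto simp: PP_def)
lemma colP1: "col PP 1 = unit_vec n N" by (rule eq_vecI, insert n2, auto simp: PP_def)

lemma Qy: "QQ *\<^sub>v y = unit_vec n 0"
proof -
  have "col (QQ * PP) 0 = QQ *\<^sub>v col PP 0" by (rule col_mult2[OF QQ_carrier PP_carrier], simp)
  thus ?thesis unfolding QP colP0 by simp
qed

lemma Qe: "QQ *\<^sub>v unit_vec n N = unit_vec n 1"
proof -
  have "col (QQ * PP) 1 = QQ *\<^sub>v col PP 1" by (rule col_mult2[OF QQ_carrier PP_carrier], insert n2, simp)
  thus ?thesis unfolding QP colP1 using col_one[of 1 n] n2 by simp
qed

lemma HH_lin: assumes w: "w \<in> carrier_vec n"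
  shows "HH *\<^sub>v w = alp w \<cdot>\<^sub>v unit_vec n N + bet w \<cdot>\<^sub>v y"
  unfolding HH_mv[OF w] by (rule eq_vecI, auto)

lemma Mcol: assumes j: "j < n"
  shows "col (QQ * HH * PP) j = vec n (\<lambda>i. (if i = 1 then alp (col PP j) else 0) + (if i = 0 then bet (col PP j) else 0))"
proof -
  have cp: "col PP j \<in> carrier_vec n" by (rule carrier_vecI, simp add: col_def)
  have "col (QQ * HH * PP) j = (QQ * HH) *\<^sub>v col PP j" by (rule col_mult2[of _ n n], insert j, auto intro: mult_carrier_mat[of _ n n _ n])
  also have "\<dots> = QQ *\<^sub>v (HH *\<^sub>v col PP j)" by (rule assoc_mult_mat_vec[OF QQ_carrier HH_carrier cp])
  also have "\<dots> = QQ *\<^sub>v (alp (col PP j) \<cdot>\<^sub>v unit_vec n N + bet (col PP j) \<cdot>\<^sub>v y)" unfolding HH_lin[OF cp] ..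
  also have "\<dots> = QQ *\<^sub>v (alp (col PP j) \<cdot>\<^sub>v unit_vec n N) + QQ *\<^sub>v (bet (col PP j) \<cdot>\<^sub>v y)"
    by (rule mult_add_distrib_mat_vec[OF QQ_carrier], auto simp: yc)
  also have "\<dots> = alp (col PP j) \<cdot>\<^sub>v (QQ *\<^sub>v unit_vec n N) + bet (col PP j) \<cdot>\<^sub>v (QQ *\<^sub>v y)"
    by (simp only: mult_mat_vec[OF QQ_carrier unit_vec_carrier] mult_mat_vec[OF QQ_carrier yc])
  also have "\<dots> = vec n (\<lambda>i. (if i = 1 then alp (col PP j) else 0) + (if i = 0 then bet (col PP j) else 0))"
    unfolding Qy Qe by (rule eq_vecI, insert n2, auto)
  finally show ?thesis .
qed

definition MM where "MM = QQ * HH * PP"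
lemma MM_carrier[simp]: "MM \<in> carrier_mat n n" unfolding MM_def by auto
lemma MM_dims[simp]: "dim_row MM = n" "dim_col MM = n" using MM_carrier unfolding carrier_mat_def by blast+

lemma MM_index: "i < n \<Longrightarrow> j < n \<Longrightarrow> MM $$ (i,j) = (if i = 1 then alp (col PP j) else 0) + (if i = 0 then bet (col PP j) else 0)"
proof -
  assume i: "i < n" and j: "j < n"
  have "MM $$ (i,j) = col MM j $ i" using i j by (simp add: MM_def)
  thus ?thesis unfolding MM_def Mcol[OF j] using i by simp
qed

lemma sim_HH_MM: "similar_mat HH MM"
proof (rule similar_matI[where n=n and P=PP and Q=QQ])
  show "HH = PP * MM * QQ" unfolding MM_def
  proof -
    have A: "QQ * HH \<in> carrier_mat n n" by (rule mult_carrier_mat[OF QQ_carrier HH_carrier])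
    have "PP * (QQ * HH * PP) * QQ = PP * ((QQ * HH) * (PP * QQ))"
      using assoc_mult_mat[OF PP_carrier mult_carrier_mat[OF A PP_carrier] QQ_carrier]
        assoc_mult_mat[OF A PP_carrier QQ_carrier] by simp
    also have "\<dots> = (PP * (QQ * HH)) * (PP * QQ)"
      using assoc_mult_mat[OF PP_carrier A mult_carrier_mat[OF PP_carrier QQ_carrier]] by simp
    also have "PP * (QQ * HH) = (PP * QQ) * HH"
      using assoc_mult_mat[OF PP_carrier QQ_carrier HH_carrier] by simp
    finally have "PP * (QQ * HH * PP) * QQ = (PP * QQ) * HH * (PP * QQ)" .
    thus "HH = PP * (QQ * HH * PP) * QQ" unfolding PQ by (simp add: left_mult_one_mat[of _ n n] right_mult_one_mat[of _ n n])
  qed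
qed (auto simp: PQ QP)


definition M2 where "M2 = mat 2 2 (\<lambda>(i,j). MM $$ (i,j))"
definition C2 where "C2 = mat 2 (n-2) (\<lambda>(i,j). MM $$ (i,j+2))"

lemma MM_block: "MM = four_block_mat M2 C2 (0\<^sub>m (n-2) 2) (0\<^sub>m (n-2) (n-2))"
proof (rule eq_matI)
  fix i j assume "i < dim_row (four_block_mat M2 C2 (0\<^sub>m (n-2) 2) (0\<^sub>m (n-2) (n-2)))"
    "j < dim_col (four_block_mat M2 C2 (0\<^sub>m (n-2) 2) (0\<^sub>m (n-2) (n-2)))"
  hence i: "i < n" and j: "j < n" using n2 by (auto simp: M2_def)
    have jj: "\<And>j. \<not> j < Suc (Suc 0) \<Longrightarrow> Suc (Suc (j - Suc (Suc 0))) = j" by arith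
  show "MM $$ (i,j) = four_block_mat M2 C2 (0\<^sub>m (n-2) 2) (0\<^sub>m (n-2) (n-2)) $$ (i,j)"
    using i j n2 by (auto simp: M2_def C2_def MM_index numeral_2_eq_2 jj)
qed (insert n2, auto simp: M2_def)

lemma char_poly_zero: "char_poly (0\<^sub>m m m :: complex mat) = (\<Prod>a\<leftarrow>replicate m 0. [:- a, 1:])"
proof -
  have "char_poly (0\<^sub>m m m :: complex mat) = (\<Prod>a\<leftarrow>diag_mat (0\<^sub>m m m :: complex mat). [:- a, 1:])"
    by (rule char_poly_upper_triangular[of _ m], auto simp: upper_triangular_def)
  also have "diag_mat (0\<^sub>m m m :: complex mat) = replicate m 0"
    by (rule nth_equalityI, auto simp: diag_mat_def)
  finally show ?thesis .
qed

lemma char_poly_MM: assumes lin: "char_poly M2 = (\<Prod>a\<leftarrow>es. [:- a, 1:])"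
  shows "char_poly HH = char_poly M2 * (\<Prod>a\<leftarrow>replicate (n-2) 0. [:- a, 1:])"
proof -
  have "char_poly HH = char_poly MM" by (rule char_poly_similar[OF sim_HH_MM])
  also have "\<dots> = char_poly M2 * char_poly (0\<^sub>m (n-2) (n-2) :: complex mat)"
  proof -
    have l1: "\<exists>es. char_poly M2 = (\<Prod>a\<leftarrow>es. [:- a, 1:])" using lin by blast
    have l2: "\<exists>es. char_poly (0\<^sub>m (n-2) (n-2) :: complex mat) = (\<Prod>a\<leftarrow>es. [:- a, 1:])" using char_poly_zero by blast
    show ?thesis
    by (rule char_poly_0_block[OF MM_block l1 l2], auto simp: M2_def C2_def)
  qed
  finally show ?thesis unfolding char_poly_zero .
qed


definition axx :: real where "axx = (\<Sum>k<N. (cmod (x$k))^2)"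
definition ayy :: real where "ayy = (\<Sum>k<N. (cmod (y$k))^2)"
definition cc where "cc = x$N + cnj (y$N)"
definition rho :: real where "rho = (cmod cc)^2"
definition TT :: real where "TT = axx + ayy + rho"
definition DD :: real where "DD = sqrt (TT^2 - 4*axx*ayy)"
definition lam1 :: real where "lam1 = (TT + DD) / 2"
definition lam2 :: real where "lam2 = (TT - DD) / 2"

lemma axx_pos: "axx > 0"
proof -
  have "(cmod (x$0))^2 \<le> axx" unfolding axx_def
    by (rule member_le_sum[of 0 "{..<N}" "\<lambda>k. (cmod (x$k))^2"], insert n2, auto)
  moreover have "(cmod (x$0))^2 > 0" using x0 by simp
  ultimately show ?thesis by linarith
qed

lemma ayy_pos: "ayy > 0"
proof -
  have "(cmod (y$0))^2 \<le> ayy" unfolding ayy_def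
    by (rule member_le_sum[of 0 "{..<N}" "\<lambda>k. (cmod (y$k))^2"], insert n2, auto)
  moreover have "(cmod (y$0))^2 > 0" using y0 by simp
  ultimately show ?thesis by linarith
qed

lemma rho_pos: "rho > 0" unfolding rho_def cc_def using c0 by simp

lemma disc_pos: "TT^2 - 4*axx*ayy > 0"
proof -
  have "TT^2 - 4*axx*ayy = (axx-ayy)^2 + rho*(2*axx+2*ayy+rho)"
    by (simp add: TT_def power2_eq_square algebra_simps)
  moreover have "rho*(2*axx+2*ayy+rho) > 0" using rho_pos axx_pos ayy_pos by simp
  moreover have "(axx-ayy)^2 \<ge> 0" by simp
  ultimately show ?thesis by linarith
qed

lemma DD_sq: "DD^2 = TT^2 - 4*axx*ayy" unfolding DD_def using disc_pos by simp
lemma DD_pos: "DD > 0" unfolding DD_def using disc_pos by simp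
lemma DD_lt: "DD < TT"
proof -
  have T: "TT > 0" unfolding TT_def using axx_pos ayy_pos rho_pos by simp
  have "DD < sqrt (TT^2)" unfolding DD_def
    by (rule real_sqrt_less_mono, insert axx_pos ayy_pos, simp)
  also have "sqrt (TT^2) = TT" using T by simp
  finally show ?thesis .
qed

lemma lam_props: "lam1 > lam2" "lam2 > 0" "lam1 + lam2 = TT" "lam1 * lam2 = axx * ayy"
proof -
  show "lam1 > lam2" "lam2 > 0" using DD_pos DD_lt unfolding lam1_def lam2_def by auto
  show "lam1 + lam2 = TT" unfolding lam1_def lam2_def by (simp add: field_simps)
  have "lam1 * lam2 = (TT^2 - DD^2) / 4" unfolding lam1_def lam2_def by (simp add: power2_eq_square algebra_simps)
  thus "lam1 * lam2 = axx * ayy" unfolding DD_sq by simp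
qed

lemma X2_split: "X2 = complex_of_real axx + cnj (x$N) * x$N"
proof -
  have "X2 = (\<Sum>k<N. cnj (x $ k) * x $ k) + cnj (x$N) * x$N" unfolding X2_def by (rule split_last, simp)
  also have "(\<Sum>k<N. cnj (x $ k) * x $ k) = complex_of_real axx" unfolding axx_def cnj_mult_self of_real_sum ..
  finally show ?thesis .
qed

lemma Y2_split: "Sy y = complex_of_real ayy + cnj (y$N) * y$N"
proof -
  have "Sy y = (\<Sum>k<N. cnj (y $ k) * y $ k) + cnj (y$N) * y$N" unfolding Sy_def by (rule split_last, simp)
  also have "(\<Sum>k<N. cnj (y $ k) * y $ k) = complex_of_real ayy" unfolding ayy_def cnj_mult_self of_real_sum ..
  finally show ?thesis .
qed

lemma Sy_e: "Sy (unit_vec n N) = cnj (y$N)"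
proof -
  have "Sy (unit_vec n N) = (\<Sum>j<n. cnj (y$j) * (if j = N then 1 else 0))" unfolding Sy_def
    by (rule sum.cong, auto)
  also have "\<dots> = cnj (y$N) * 1" by (rule sum_delta_lt', simp)
  finally show ?thesis by simp
qed

lemma colP1': "col PP (Suc 0) = unit_vec n (n - Suc 0)" using colP1 by simp

lemma M2_entries: "M2 $$ (0,0) = bet y" "M2 $$ (0,1) = bet (unit_vec n N)"
  "M2 $$ (1,0) = alp y" "M2 $$ (1,1) = alp (unit_vec n N)"
  using n2 by (auto simp: M2_def MM_index colP0 colP1')

lemma M2_trace: "M2 $$ (0,0) + M2 $$ (1,1) = complex_of_real TT"
proof -
  have r: "complex_of_real rho = cc * cnj cc" unfolding rho_def by (rule complex_norm_square)
  have e: "unit_vec n N $ N = 1" by simp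
  show ?thesis unfolding M2_entries bet_def alp_def Y2_split X2_split Sy_e TT_def of_real_add r cc_def e
    by (simp only: mult_1_right, rule trace_id)
qed

lemma M2_det: "M2 $$ (0,0) * M2 $$ (1,1) - M2 $$ (0,1) * M2 $$ (1,0) = complex_of_real (axx * ayy)"
proof -
  have e: "unit_vec n N $ N = 1" by simp
  show ?thesis unfolding M2_entries bet_def alp_def Y2_split X2_split Sy_e of_real_mult e
    by (simp only: mult_1_right, rule det_id)
qed

lemma char_poly_M2: "char_poly M2 = [:- complex_of_real lam1, 1:] * [:- complex_of_real lam2, 1:]"
proof -
  have C: "char_poly_matrix M2 \<in> carrier_mat 2 2" by (simp add: M2_def)
  have "char_poly M2 = ([:0,1:] + [:- M2 $$ (0,0):]) * ([:0,1:] + [:- M2 $$ (1,1):]) - [:- M2 $$ (0,1):] * [:- M2 $$ (1,0):]"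
    unfolding char_poly_def det2[OF C] by (simp add: char_poly_matrix_def M2_def)
  also have "\<dots> = [:- complex_of_real lam1, 1:] * [:- complex_of_real lam2, 1:]"
  proof (rule poly2)
    show "complex_of_real lam1 + complex_of_real lam2 = M2 $$ (0,0) + M2 $$ (1,1)"
      unfolding M2_trace of_real_add[symmetric] lam_props(3) ..
    show "complex_of_real lam1 * complex_of_real lam2 = M2 $$ (0,0) * M2 $$ (1,1) - M2 $$ (0,1) * M2 $$ (1,0)"
      unfolding M2_det of_real_mult[symmetric] lam_props(4) ..
  qed
  finally show ?thesis .
qed

definition sv :: "real list" where "sv = [sqrt lam1, sqrt lam2] @ replicate (n-2) 0"

lemma char_poly_HH: "char_poly HH = (\<Prod>t\<leftarrow>sv. [:- complex_of_real (t^2), 1:])"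
proof -
  have "char_poly HH = char_poly M2 * (\<Prod>a\<leftarrow>replicate (n-2) 0. [:- a, 1:])"
  proof (rule char_poly_MM)
    show "char_poly M2 = (\<Prod>a\<leftarrow>[complex_of_real lam1, complex_of_real lam2]. [:- a, 1:])"
      unfolding char_poly_M2 by simp
  qed
  also have "\<dots> = (\<Prod>t\<leftarrow>sv. [:- complex_of_real (t^2), 1:])"
  proof -
    have s1: "(sqrt lam1)^2 = lam1" "(sqrt lam2)^2 = lam2" using lam_props by auto
    have m: "map (\<lambda>t. [:- complex_of_real (t^2), 1:]) sv = [[:- complex_of_real lam1,1:], [:- complex_of_real lam2,1:]] @ replicate (n-2) [:0,1:]"
      by (simp del: of_real_power add: sv_def s1)
    have m2: "map (\<lambda>a. [:-a,1:]) (replicate (n-2) (0::complex)) = replicate (n-2) [:0,1:]" by simp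
    show ?thesis unfolding m m2 char_poly_M2
      by (simp only: prod_list.append prod_list.Cons prod_list.Nil mult_1_right mult.assoc)
  qed
  finally show ?thesis .
qed

lemma sing_vals_BB: "sing_vals BB = sv"
proof (rule sing_vals_eq)
  show "length sv = dim_col BB" unfolding sv_def using n2 by simp
  show "sorted_wrt (\<ge>) sv" unfolding sv_def using lam_props
    by (auto simp: sorted_wrt_append less_imp_le sorted_rep0)
  show "\<forall>t\<in>set sv. t \<ge> 0" unfolding sv_def using lam_props by auto
  show "char_poly (mat_adjoint BB * BB) = (\<Prod>t\<leftarrow>sv. [:- complex_of_real (t^2), 1:])"
    using char_poly_HH unfolding HH_def .
qed

lemma sing_vals_gap: "sing_vals BB ! 0 > sing_vals BB ! 1"
  unfolding sing_vals_BB sv_def using lam_props by simp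


definition al :: real where "al = sqrt axx"
definition be :: real where "be = sqrt ayy"
definition dd1 :: real where "dd1 = lam1 - (rho + axx)"
definition dd2 :: real where "dd2 = lam2 - (rho + axx)"

lemma al_sq: "al^2 = axx" "al > 0" unfolding al_def using axx_pos by auto
lemma be_sq: "be^2 = ayy" "be > 0" unfolding be_def using ayy_pos by auto

lemma svd2_inst: "svd2 cc rho al be dd1 dd2"
proof (unfold_locales)
  show "cc \<noteq> 0" using c0 unfolding cc_def .
  show "rho = (cmod cc)^2" unfolding rho_def ..
  show "al > 0" "be > 0" using al_sq be_sq by auto
  show "dd1 > dd2" unfolding dd1_def dd2_def using lam_props by simp
  show "dd1 * dd2 = - rho * be^2"
  proof -
    have "dd1 * dd2 = lam1 * lam2 - (rho + axx) * (lam1 + lam2) + (rho + axx)^2"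
      unfolding dd1_def dd2_def by (simp add: algebra_simps power2_eq_square)
    also have "\<dots> = - rho * ayy" unfolding lam_props(3,4) TT_def by (simp add: algebra_simps power2_eq_square)
    finally show ?thesis unfolding be_sq .
  qed
  show "dd1 + dd2 = be^2 - rho - al^2" unfolding dd1_def dd2_def be_sq al_sq
    using lam_props(3) unfolding TT_def by simp
  show "dd1 + rho + al^2 > 0" "dd2 + rho + al^2 > 0" unfolding dd1_def dd2_def al_sq using lam_props by auto
qed

lemma sf_eq: "sf rho al dd1 = sqrt lam1" "sf rho al dd2 = sqrt lam2"
  unfolding sf_def dd1_def dd2_def al_sq by simp_all

definition xv :: "complex \<Rightarrow> complex \<Rightarrow> complex vec" where
  "xv a b = vec n (\<lambda>i. if i = N then a else b * x$i / complex_of_real al)"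
definition yv :: "complex \<Rightarrow> complex \<Rightarrow> complex vec" where
  "yv a b = vec n (\<lambda>i. if i = N then a else b * y$i / complex_of_real be)"

lemma xv_carrier[simp]: "xv a b \<in> carrier_vec n" unfolding xv_def by simp
lemma yv_carrier[simp]: "yv a b \<in> carrier_vec n" unfolding yv_def by simp

lemma ip_xv: "xv a b \<bullet>c xv a' b' = a * cnj a' + b * cnj b'"
proof -
  have "xv a b \<bullet>c xv a' b' = (\<Sum>i<n. xv a b $ i * cnj (xv a' b' $ i))" by (rule cip, simp_all)
  also have "\<dots> = (\<Sum>i<N. xv a b $ i * cnj (xv a' b' $ i)) + xv a b $ N * cnj (xv a' b' $ N)"
    by (rule split_last, simp)
  also have "(\<Sum>i<N. xv a b $ i * cnj (xv a' b' $ i)) = (\<Sum>i<N. b * cnj b' / complex_of_real (al^2) * (cnj (x$i) * x$i))"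
    by (rule sum.cong, auto simp: xv_def power2_eq_square)
  also have "\<dots> = b * cnj b' / complex_of_real (al^2) * complex_of_real axx"
    unfolding sum_distrib_left[symmetric] cnj_mult_self of_real_sum axx_def ..
  also have "\<dots> = b * cnj b'" unfolding al_sq using axx_pos by simp
  finally show ?thesis by (simp add: xv_def)
qed

lemma ip_yv: "yv a b \<bullet>c yv a' b' = a * cnj a' + b * cnj b'"
proof -
  have "yv a b \<bullet>c yv a' b' = (\<Sum>i<n. yv a b $ i * cnj (yv a' b' $ i))" by (rule cip, simp_all)
  also have "\<dots> = (\<Sum>i<N. yv a b $ i * cnj (yv a' b' $ i)) + yv a b $ N * cnj (yv a' b' $ N)"
    by (rule split_last, simp)
  also have "(\<Sum>i<N. yv a b $ i * cnj (yv a' b' $ i)) = (\<Sum>i<N. b * cnj b' / complex_of_real (be^2) * (cnj (y$i) * y$i))"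
    by (rule sum.cong, auto simp: yv_def power2_eq_square)
  also have "\<dots> = b * cnj b' / complex_of_real (be^2) * complex_of_real ayy"
    unfolding sum_distrib_left[symmetric] cnj_mult_self of_real_sum ayy_def ..
  also have "\<dots> = b * cnj b'" unfolding be_sq using ayy_pos by simp
  finally show ?thesis by (simp add: yv_def)
qed


abbreviation "a1 \<equiv> A1 rho al be dd1"
abbreviation "a2 \<equiv> A1 rho al be dd2"
abbreviation "a1' \<equiv> A2 cc rho al be dd1"
abbreviation "a2' \<equiv> A2 cc rho al be dd2"
abbreviation "b1 \<equiv> B1 cc rho be dd1"
abbreviation "b2 \<equiv> B1 cc rho be dd2"
abbreviation "b1' \<equiv> B2 rho be dd1"
abbreviation "b2' \<equiv> B2 rho be dd2"

lemma svd_exists: "rank2_svd n BB (sqrt lam1) (sqrt lam2) (xv a1 a1') (xv a2 a2') (yv b1 b1') (yv b2 b2')"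
proof -
  note S = svd2_inst
  have G11: "complex_of_real (sqrt lam1) * a1 * cnj b1 + complex_of_real (sqrt lam2) * a2 * cnj b2 = cc"
    using svd2.G11[OF S] unfolding sf_eq .
  have G12: "complex_of_real (sqrt lam1) * a1 * cnj b1' + complex_of_real (sqrt lam2) * a2 * cnj b2' = complex_of_real be"
    using svd2.G12[OF S] unfolding sf_eq .
  have G21: "complex_of_real (sqrt lam1) * a1' * cnj b1 + complex_of_real (sqrt lam2) * a2' * cnj b2 = complex_of_real al"
    using svd2.G21[OF S] unfolding sf_eq .
  have G22: "complex_of_real (sqrt lam1) * a1' * cnj b1' + complex_of_real (sqrt lam2) * a2' * cnj b2' = 0"
    using svd2.G22[OF S] unfolding sf_eq .
  have mat: "BB = complex_of_real (sqrt lam1) \<cdot>\<^sub>m outer_adj (xv a1 a1') (yv b1 b1') + complex_of_real (sqrt lam2) \<cdot>\<^sub>m outer_adj (xv a2 a2') (yv b2 b2')"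
  proof (rule eq_matI)
    fix i j assume "i < dim_row (complex_of_real (sqrt lam1) \<cdot>\<^sub>m outer_adj (xv a1 a1') (yv b1 b1') + complex_of_real (sqrt lam2) \<cdot>\<^sub>m outer_adj (xv a2 a2') (yv b2 b2'))"
      "j < dim_col (complex_of_real (sqrt lam1) \<cdot>\<^sub>m outer_adj (xv a1 a1') (yv b1 b1') + complex_of_real (sqrt lam2) \<cdot>\<^sub>m outer_adj (xv a2 a2') (yv b2 b2'))"
    hence i: "i < n" and j: "j < n" by (auto simp: outer_adj_def xv_def yv_def)
    let ?s1 = "complex_of_real (sqrt lam1)" and ?s2 = "complex_of_real (sqrt lam2)"
    have R: "(?s1 \<cdot>\<^sub>m outer_adj (xv a1 a1') (yv b1 b1') + ?s2 \<cdot>\<^sub>m outer_adj (xv a2 a2') (yv b2 b2')) $$ (i,j)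
      = ?s1 * (xv a1 a1' $ i * cnj (yv b1 b1' $ j)) + ?s2 * (xv a2 a2' $ i * cnj (yv b2 b2' $ j))"
      using i j by (simp add: outer_adj_def xv_def yv_def)
    have xvi: "xv a b $ i = (if i = N then a * 1 else b * (x$i / complex_of_real al))" for a b
      using i by (simp add: xv_def)
    have yvj: "yv a b $ j = (if j = N then a * 1 else b * (y$j / complex_of_real be))" for a b
      using j by (simp add: yv_def)
    have alz: "complex_of_real al \<noteq> 0" "complex_of_real be \<noteq> 0" using al_sq be_sq by auto
    show "BB $$ (i,j) = (?s1 \<cdot>\<^sub>m outer_adj (xv a1 a1') (yv b1 b1') + ?s2 \<cdot>\<^sub>m outer_adj (xv a2 a2') (yv b2 b2')) $$ (i,j)"
    proof (cases "i = N"; cases "j = N")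
      assume ci: "i = N" and cj: "j = N"
      have X: "\<And>a b. xv a b $ i = a * 1" using i ci by (simp add: xv_def)
      have Y: "\<And>a b. yv a b $ j = a * 1" using j cj by (simp add: yv_def)
      show ?thesis unfolding R X Y ring4 G11 using i j ci cj by (simp add: BB_index cc_def)
    next
      assume ci: "i = N" and cj: "j \<noteq> N"
      have X: "\<And>a b. xv a b $ i = a * 1" using i ci by (simp add: xv_def)
      have Y: "\<And>a b. yv a b $ j = b * (y$j / complex_of_real be)" using j cj by (simp add: yv_def)
      show ?thesis unfolding R X Y ring4 G12 using i j ci cj alz by (simp add: BB_index)
    next
      assume ci: "i \<noteq> N" and cj: "j = N"
      have X: "\<And>a b. xv a b $ i = b * (x$i / complex_of_real al)" using i ci by (simp add: xv_def)
      have Y: "\<And>a b. yv a b $ j = a * 1" using j cj by (simp add: yv_def)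
      show ?thesis unfolding R X Y ring4 G21 using i j ci cj alz by (simp add: BB_index)
    next
      assume ci: "i \<noteq> N" and cj: "j \<noteq> N"
      have X: "\<And>a b. xv a b $ i = b * (x$i / complex_of_real al)" using i ci by (simp add: xv_def)
      have Y: "\<And>a b. yv a b $ j = b * (y$j / complex_of_real be)" using j cj by (simp add: yv_def)
      show ?thesis unfolding R X Y ring4 G22 using i j ci cj by (simp add: BB_index)
    qed
  qed (auto simp: outer_adj_def xv_def yv_def)
  show ?thesis unfolding rank2_svd_def
    using mat ip_xv ip_yv svd2.normA[OF S] svd2.normB[OF S] svd2.orthA[OF S] svd2.orthB[OF S] lam_props
    by (auto simp: less_imp_le)
qed


lemma Bsum: "i < n \<Longrightarrow> (\<Sum>j<n. BB $$ (i,j) * w j) = x $ i * w N + (if i = N then (\<Sum>j<n. cnj (y $ j) * w j) else 0)"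
proof -
  assume i: "i < n"
  have "(\<Sum>j<n. BB $$ (i,j) * w j) = (\<Sum>j<n. (if j = N then x $ i else 0) * w j + (if i = N then cnj (y $ j) * w j else 0))"
    by (rule sum.cong, auto simp: BB_index i algebra_simps)
  also have "\<dots> = x $ i * w N + (if i = N then (\<Sum>j<n. cnj (y $ j) * w j) else 0)"
    by (simp add: sum.distrib sum_delta_lt)
  finally show ?thesis .
qed

lemma Bsum': "i < n \<Longrightarrow> (\<Sum>k<n. cnj (BB $$ (k,i)) * w k) = (if i = N then (\<Sum>k<n. cnj (x $ k) * w k) else 0) + y $ i * w N"
proof -
  assume i: "i < n"
  have "(\<Sum>k<n. cnj (BB $$ (k,i)) * w k) = (\<Sum>k<n. (if i = N then cnj (x $ k) * w k else 0) + (if k = N then y $ i else 0) * w k)"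
    by (rule sum.cong, auto simp: BB_index i algebra_simps)
  also have "\<dots> = (if i = N then (\<Sum>k<n. cnj (x $ k) * w k) else 0) + y $ i * w N"
    by (simp only: sum.distrib sum_delta_lt Nn, simp)
  finally show ?thesis .
qed

lemma nz_of_unit: assumes "(u :: complex vec) \<in> carrier_vec n" "u \<bullet>c u = 1" shows "\<exists>i<n. u $ i \<noteq> 0"
proof (rule ccontr)
  assume "\<not> (\<exists>i<n. u $ i \<noteq> 0)"
  hence "(\<Sum>j<n. u $ j * cnj (u $ j)) = 0" by simp
  moreover have "u \<bullet>c u = (\<Sum>j<n. u $ j * cnj (u $ j))" by (rule cip[OF assms(1) assms(1)])
  ultimately show False using assms(2) by simp
qed

lemma part3: assumes S: "rank2_svd n BB s1 s2 u1 u2 v1 v2"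
  shows "(complex_of_real s1 \<cdot>\<^sub>m outer_adj u1 v1) $$ (0, 0) \<noteq> 0 \<and>
         (complex_of_real s2 \<cdot>\<^sub>m outer_adj u2 v2) $$ (0, 0) \<noteq> 0"
proof -
  from S have c: "u1 \<in> carrier_vec n" "u2 \<in> carrier_vec n" "v1 \<in> carrier_vec n" "v2 \<in> carrier_vec n"
    and o: "u1 \<bullet>c u1 = 1" "u2 \<bullet>c u2 = 1" and s: "s1 \<ge> s2" "s2 > 0"
    unfolding rank2_svd_def by auto
  have cy: "x $ (n-1) + cnj (y $ (n-1)) \<noteq> 0" by (rule c0)
  have p1: "u1 $ 0 \<noteq> 0 \<and> v1 $ 0 \<noteq> 0"
  proof (rule svd_pair[OF n2 x0 y0 cy, of "complex_of_real s1"])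
    show "complex_of_real s1 \<noteq> 0" using s by simp
    show "\<exists>i<n. u1 $ i \<noteq> 0" by (rule nz_of_unit[OF c(1) o(1)])
    fix i assume i: "i < n"
    show "complex_of_real s1 * u1 $ i = x $ i * v1 $ (n - 1) + (if i = n - 1 then \<Sum>j<n. cnj (y $ j) * v1 $ j else 0)"
      using svd_eqs(1)[OF S i] Bsum[OF i, of "\<lambda>j. v1 $ j"] by simp
    show "complex_of_real s1 * v1 $ i = (if i = n - 1 then \<Sum>k<n. cnj (x $ k) * u1 $ k else 0) + y $ i * u1 $ (n - 1)"
      using svd_eqs(3)[OF S i] Bsum'[OF i, of "\<lambda>j. u1 $ j"] by simp
  qed
  have p2: "u2 $ 0 \<noteq> 0 \<and> v2 $ 0 \<noteq> 0"
  proof (rule svd_pair[OF n2 x0 y0 cy, of "complex_of_real s2"])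
    show "complex_of_real s2 \<noteq> 0" using s by simp
    show "\<exists>i<n. u2 $ i \<noteq> 0" by (rule nz_of_unit[OF c(2) o(2)])
    fix i assume i: "i < n"
    show "complex_of_real s2 * u2 $ i = x $ i * v2 $ (n - 1) + (if i = n - 1 then \<Sum>j<n. cnj (y $ j) * v2 $ j else 0)"
      using svd_eqs(2)[OF S i] Bsum[OF i, of "\<lambda>j. v2 $ j"] by simp
    show "complex_of_real s2 * v2 $ i = (if i = n - 1 then \<Sum>k<n. cnj (x $ k) * u2 $ k else 0) + y $ i * u2 $ (n - 1)"
      using svd_eqs(4)[OF S i] Bsum'[OF i, of "\<lambda>j. u2 $ j"] by simp
  qed
  have "(complex_of_real s1 \<cdot>\<^sub>m outer_adj u1 v1) $$ (0, 0) = complex_of_real s1 * (u1 $ 0 * cnj (v1 $ 0))"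
    using c by (simp add: outer_adj_def)
  moreover have "(complex_of_real s2 \<cdot>\<^sub>m outer_adj u2 v2) $$ (0, 0) = complex_of_real s2 * (u2 $ 0 * cnj (v2 $ 0))"
    using c by (simp add: outer_adj_def)
  ultimately show ?thesis using p1 p2 s by simp
qed

end

theorem lemma3p1:
  fixes n :: nat and x y :: "complex vec" and B :: "complex mat"
  assumes "n \<ge> 2" and "x \<in> carrier_vec n" and "y \<in> carrier_vec n"
    and "B = outer_adj x (unit_vec n (n - 1)) + outer_adj (unit_vec n (n - 1)) y"
    and "B $$ (0, n - 1) \<noteq> 0" and "B $$ (n - 1, 0) \<noteq> 0" and "B $$ (n - 1, n - 1) \<noteq> 0"
  shows "vec_space.rank n B = 2
    \<and> (\<exists>s1 s2 u1 u2 v1 v2. rank2_svd n B s1 s2 u1 u2 v1 v2)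
    \<and> (\<forall>s1 s2 u1 u2 v1 v2. rank2_svd n B s1 s2 u1 u2 v1 v2 \<longrightarrow>
         (complex_of_real s1 \<cdot>\<^sub>m outer_adj u1 v1) $$ (0, 0) \<noteq> 0 \<and>
         (complex_of_real s2 \<cdot>\<^sub>m outer_adj u2 v2) $$ (0, 0) \<noteq> 0)
    \<and> sing_vals B ! 0 > sing_vals B ! 1"
proof -
  note n2 = assms(1) and xc = assms(2) and yc = assms(3) and B = assms(4)
  have Bidx: "B $$ (i,j) = (if j = n - 1 then x $ i else 0) + (if i = n - 1 then cnj (y $ j) else 0)"
    if "i < n" "j < n" for i j using that xc yc unfolding B outer_adj_def by auto
  have x0: "x $ 0 \<noteq> 0" using assms(5) Bidx[of 0 "n-1"] n2 by auto
  have y0: "y $ 0 \<noteq> 0" using assms(6) Bidx[of "n-1" 0] n2 by auto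
  have c0: "x $ (n-1) + cnj (y $ (n-1)) \<noteq> 0" using assms(7) Bidx[of "n-1" "n-1"] n2 by auto
  interpret S: setting n x y by (unfold_locales, insert n2 xc yc x0 y0 c0, auto)
  have BB: "B = S.BB" unfolding S.BB_def B ..
  show ?thesis
  proof (intro conjI)
    show "vec_space.rank n B = 2" by (rule rank_two[OF n2 xc yc B assms(5,6)])
    show "\<exists>s1 s2 u1 u2 v1 v2. rank2_svd n B s1 s2 u1 u2 v1 v2" unfolding BB using S.svd_exists by blast
    show "\<forall>s1 s2 u1 u2 v1 v2. rank2_svd n B s1 s2 u1 u2 v1 v2 \<longrightarrow>
         (complex_of_real s1 \<cdot>\<^sub>m outer_adj u1 v1) $$ (0, 0) \<noteq> 0 \<and>
         (complex_of_real s2 \<cdot>\<^sub>m outer_adj u2 v2) $$ (0, 0) \<noteq> 0"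
      unfolding BB using S.part3 by blast
    show "sing_vals B ! 0 > sing_vals B ! 1" unfolding BB by (rule S.sing_vals_gap)
  qed
qed

end
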